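(* Let $\alpha\in(1,3)$, $n\ge2$, $\mu\ge0$, and let $V(r,\varphi)$ be the Maxwell-ring potential in polar coordinates described in the context. Then there is a positive function $\omega(r,\varphi)$ such that $$V_\varphi(r,\varphi)=-\sin(n\varphi)\,\omega(r,\varphi)$$ for all $(r,\varphi)$ in the domain of $V$ ($r>0$, $re^{i\varphi}$ not a vertex $e^{ij\zeta}$).
   Context: Let $\zeta=2\pi/n$, $\phi_\alpha'(r)=-r^{-\alpha}$, $s=2^{-\alpha}\sum_{j=1}^{n-1}\sin^{-(\alpha-1)}(j\zeta/2)$. In polar coordinates $u=re^{i\varphi}$, the planar potential of a satellite attracted by $n$ unit masses at $e^{ij\zeta}$ and a central mass $\mu$ at $0$ (rescaled) is $$V(r,\varphi)=\frac{r^2}{2}+\frac{\mu}{s+\mu}\phi_\alpha(r)+\sum_{j=1}^n\frac1{s+\mu}\phi_\alpha\big(\|r-e^{i(j\zeta-\varphi)}\|\big).$$ *)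

theory Defs
  imports "HOL-Analysis.Analysis"
begin

text \<open>Potential with phi_alpha' (r) = - r^(-alpha); for alpha > 1 we take the
antiderivative r^(1-alpha)/(alpha-1) (the additive constant is irrelevant).\<close>
definition phi_alpha :: "real \<Rightarrow> real \<Rightarrow> real" where
  "phi_alpha \<alpha> r = r powr (1 - \<alpha>) / (\<alpha> - 1)"

definition zeta :: "nat \<Rightarrow> real" where
  "zeta n = 2 * pi / real n"

definition maxwell_s :: "nat \<Rightarrow> real \<Rightarrow> real" where
  "maxwell_s n \<alpha> = 2 powr (- \<alpha>) *
     (\<Sum>j = 1..n - 1. sin (real j * zeta n / 2) powr (- (\<alpha> - 1)))"

definition maxwell_V :: "nat \<Rightarrow> real \<Rightarrow> real \<Rightarrow> real \<Rightarrow> real \<Rightarrow> real" where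
  "maxwell_V n \<alpha> \<mu> r \<phi> =
     r\<^sup>2 / 2 + \<mu> / (maxwell_s n \<alpha> + \<mu>) * phi_alpha \<alpha> r
     + (\<Sum>j = 1..n. 1 / (maxwell_s n \<alpha> + \<mu>) *
          phi_alpha \<alpha> (cmod (complex_of_real r - cis (real j * zeta n - \<phi>))))"

definition maxwell_dom :: "nat \<Rightarrow> real \<Rightarrow> real \<Rightarrow> bool" where
  "maxwell_dom n r \<phi> \<longleftrightarrow> 0 < r \<and>
     (\<forall>j\<in>{1..n}. complex_of_real r * cis \<phi> \<noteq> cis (real j * zeta n))"

end

theory Submission
  imports Defs
begin


lemma roots_sum_zero:
  fixes n m :: nat
  assumes "0 < m" "m < n"
  shows "(\<Sum>j=1..n. cis (real j * zeta n) ^ m) = 0"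
proof -
  define q where "q = cis (real m * zeta n)"
  have ang: "0 < real m * zeta n" "real m * zeta n < 2 * pi"
    using assms by (auto simp: zeta_def field_simps)
  have "q \<noteq> 1"
  proof
    assume "q = 1"
    then have "cos (real m * zeta n) = 1" unfolding q_def by (metis cis.simps(1) one_complex.simps(1))
    then obtain k::int where k: "real m * zeta n = 2 * pi * k" using cos_one_2pi_int by (metis mult.commute mult.left_commute)
    from ang k have "0 < k" "k < 1" by (auto simp: zero_less_mult_iff mult_less_cancel_left1)
    then show False by simp
  qed
  have qn: "q ^ n = 1"
  proof -
    have "q ^ n = cis (real n * (real m * zeta n))" unfolding q_def by (simp add: Complex.DeMoivre)
    also have "real n * (real m * zeta n) = 2 * pi * real m" using assms by (simp add: zeta_def)
    finally show ?thesis by simp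
  qed
  have "(\<Sum>j=1..n. cis (real j * zeta n) ^ m) = (\<Sum>j=1..n. q ^ j)"
    by (intro sum.cong) (auto simp: q_def Complex.DeMoivre power_mult[symmetric] mult.commute mult.left_commute)
  also have "\<dots> = (\<Sum>j<n. q * q ^ j)"
  proof -
    have "(\<Sum>j=1..n. q ^ j) = (\<Sum>j\<in>Suc ` {..<n}. q ^ j)"
      by (simp add: image_Suc_lessThan)
    also have "\<dots> = (\<Sum>j<n. q * q ^ j)" by (subst sum.reindex) auto
    finally show ?thesis .
  qed
  also have "\<dots> = q * (\<Sum>j<n. q ^ j)" by (simp add: sum_distrib_left)
  also have "\<dots> = 0" using \<open>q \<noteq> 1\<close> qn by (simp add: sum_gp_strict)
  finally show ?thesis .
qed

lemma re_cayley:
  fixes y :: complex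
  assumes "y \<noteq> 1"
  shows "Re ((1 + y) / (1 - y)) = (1 - (cmod y)^2) / (cmod (1 - y))^2"
proof -
  have d: "(Re (1 - y))^2 + (Im (1 - y))^2 = (cmod (1 - y))^2" by (simp add: cmod_power2)
  have "cmod y ^2 = (Re y)^2 + (Im y)^2" by (simp add: cmod_power2)
  then show ?thesis using d by (simp add: Re_divide power2_eq_square algebra_simps)
qed

lemma poisson_re:
  fixes \<rho> \<theta> :: real
  assumes "0 \<le> \<rho>" "\<rho> < 1"
  shows "(1 - \<rho>^2) / (1 + \<rho>^2 - 2 * \<rho> * cos \<theta>) = Re ((1 + \<rho> * cis \<theta>) / (1 - \<rho> * cis \<theta>))"
proof -
  have ne: "complex_of_real \<rho> * cis \<theta> \<noteq> 1"
  proof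
    assume "complex_of_real \<rho> * cis \<theta> = 1"
    then have "cmod (complex_of_real \<rho> * cis \<theta>) = 1" by simp
    then show False using assms by (simp add: norm_mult)
  qed
  have "(cmod (1 - complex_of_real \<rho> * cis \<theta>))^2 = 1 + \<rho>^2 - 2 * \<rho> * cos \<theta>"
    unfolding cmod_power2 by (simp add: power2_eq_square algebra_simps) (metis distrib_left mult.assoc mult.right_neutral sin_cos_squared_add3)
  moreover have "(cmod (complex_of_real \<rho> * cis \<theta>))^2 = \<rho>^2" using assms by (simp add: norm_mult)
  ultimately show ?thesis using re_cayley[OF ne] by simp
qed

lemma geo_inv:
  fixes y :: complex
  assumes "y ^ n \<noteq> 1"
  shows "1 / (1 - y) = (\<Sum>m<n. y ^ m) / (1 - y ^ n)"
proof -
  have e: "1 - y^n = (1 - y) * (\<Sum>m<n. y^m)" by (rule one_diff_power_eq)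
  have n0: "1 - y ^ n \<noteq> 0" using assms by auto
  then have "(1 - y) \<noteq> 0" "(\<Sum>m<n. y^m) \<noteq> 0" using e by auto
  then show ?thesis using e n0 by (simp add: field_simps)
qed

lemma cayley_sum:
  fixes n :: nat and z :: complex
  assumes "1 \<le> n" "cmod z < 1"
  shows "(\<Sum>j=1..n. (1 + z * cis (real j * zeta n)) / (1 - z * cis (real j * zeta n)))
         = of_nat n * ((1 + z ^ n) / (1 - z ^ n))"
proof -
  define c where "c j = cis (real j * zeta n)" for j :: nat
  have cn: "c j ^ n = 1" for j
  proof -
    have "c j ^ n = cis (real n * (real j * zeta n))" unfolding c_def by (simp add: Complex.DeMoivre)
    also have "real n * (real j * zeta n) = 2 * pi * real j" using assms by (simp add: zeta_def)
    finally show ?thesis by simp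
  qed
  have zn: "cmod (z ^ n) < 1" using assms by (simp add: norm_power power_less_one_iff)
  then have zn1: "z ^ n \<noteq> 1" by auto
  have yn: "(z * c j) ^ n = z ^ n" for j by (simp add: power_mult_distrib cn)
  have "(\<Sum>j=1..n. 1 / (1 - z * c j)) = (\<Sum>j=1..n. (\<Sum>m<n. z^m * c j ^ m) / (1 - z ^ n))"
  proof (intro sum.cong refl)
    fix j assume "j \<in> {1..n}"
    have "1 / (1 - z * c j) = (\<Sum>m<n. (z * c j) ^ m) / (1 - (z * c j) ^ n)"
      by (rule geo_inv) (simp add: yn zn1)
    then show "1 / (1 - z * c j) = (\<Sum>m<n. z^m * c j ^ m) / (1 - z ^ n)"
      by (simp only: cn power_mult_distrib mult_1_right)
  qed
  also have "\<dots> = (\<Sum>m<n. z^m * (\<Sum>j=1..n. c j ^ m)) / (1 - z ^ n)"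
    by (simp add: sum_divide_distrib[symmetric] sum_distrib_left) (rule disjI2, rule sum.swap)
  also have "(\<Sum>m<n. z^m * (\<Sum>j=1..n. c j ^ m)) = (\<Sum>m\<in>{0}. z^m * (\<Sum>j=1..n. c j ^ m))"
  proof (rule sum.mono_neutral_right)
    show "\<forall>i\<in>{..<n} - {0}. z ^ i * (\<Sum>j = 1..n. c j ^ i) = 0"
      using roots_sum_zero[of _ n] by (auto simp: c_def)
  qed (use assms in auto)
  also have "\<dots> = of_nat n" by simp
  finally have S: "(\<Sum>j=1..n. 1 / (1 - z * c j)) = of_nat n / (1 - z ^ n)" .
  have ne: "1 - z * c j \<noteq> 0" for j
  proof
    assume "1 - z * c j = 0"
    then have "cmod (z * c j) = 1" by (metis eq_iff_diff_eq_0 norm_one)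
    then show False using assms by (simp add: norm_mult c_def)
  qed
  have "(\<Sum>j=1..n. (1 + z * c j) / (1 - z * c j)) = (\<Sum>j=1..n. 2 * (1 / (1 - z * c j)) - 1)"
  proof (intro sum.cong refl)
    fix j
    have "(1 + z * c j) / (1 - z * c j) = 2 / (1 - z * c j) - 1" using ne[of j]
      by (simp add: field_simps)
    then show "(1 + z * c j) / (1 - z * c j) = 2 * (1 / (1 - z * c j)) - 1" by simp
  qed
  also have "\<dots> = 2 * (of_nat n / (1 - z ^ n)) - of_nat n"
    by (simp only: sum_subtractf sum_distrib_left[symmetric] S[symmetric]) simp
  also have "\<dots> = of_nat n * ((1 + z ^ n) / (1 - z ^ n))"
    using zn1 by (simp add: field_simps)
  finally show ?thesis unfolding c_def .
qed

lemma poisson_sum: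
  fixes n :: nat and \<rho> \<phi> :: real
  assumes "1 \<le> n" "0 \<le> \<rho>" "\<rho> < 1"
  shows "(\<Sum>j=1..n. (1 - \<rho>^2) / (1 + \<rho>^2 - 2 * \<rho> * cos (real j * zeta n - \<phi>)))
       = real n * (1 - (\<rho>^n)^2) / (1 + (\<rho>^n)^2 - 2 * \<rho>^n * cos (real n * \<phi>))"
proof -
  define z where "z = complex_of_real \<rho> * cis (- \<phi>)"
  have zc: "complex_of_real \<rho> * cis (real j * zeta n - \<phi>) = z * cis (real j * zeta n)" for j
  proof -
    have "cis (- \<phi>) * cis (real j * zeta n) = cis (real j * zeta n - \<phi>)" by (simp add: cis_mult)
    then show ?thesis by (simp add: z_def)
  qed
  have zn: "z ^ n = complex_of_real (\<rho>^n) * cis (- (real n * \<phi>))"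
    by (simp add: z_def power_mult_distrib Complex.DeMoivre)
  have cz: "cmod z < 1" using assms by (simp add: z_def norm_mult)
  have "(\<Sum>j=1..n. (1 - \<rho>^2) / (1 + \<rho>^2 - 2 * \<rho> * cos (real j * zeta n - \<phi>)))
      = (\<Sum>j=1..n. Re ((1 + z * cis (real j * zeta n)) / (1 - z * cis (real j * zeta n))))"
    by (intro sum.cong refl) (simp add: poisson_re[OF assms(2,3)] zc)
  also have "\<dots> = Re (\<Sum>j=1..n. (1 + z * cis (real j * zeta n)) / (1 - z * cis (real j * zeta n)))"
    by simp
  also have "\<dots> = Re (of_nat n * ((1 + z ^ n) / (1 - z ^ n)))"
    by (simp only: cayley_sum[OF assms(1) cz])
  also have "\<dots> = real n * Re ((1 + z ^ n) / (1 - z ^ n))"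
    by (simp only: times_complex.sel complex_Re_of_nat complex_Im_of_nat)
  also have "Re ((1 + z ^ n) / (1 - z ^ n)) = (1 - (\<rho>^n)^2) / (1 + (\<rho>^n)^2 - 2 * \<rho>^n * cos (- (real n * \<phi>)))"
    unfolding zn by (rule poisson_re[symmetric]) (use assms in \<open>auto simp: power_less_one_iff\<close>)
  finally show ?thesis by simp
qed

lemma T_sign:
  fixes n :: nat and r B \<phi> :: real
  assumes "1 \<le> n" "0 < r" "2 * r < B"
  shows "\<exists>w>0. (\<Sum>j=1..n. sin (real j * zeta n - \<phi>) / (B - 2 * r * cos (real j * zeta n - \<phi>))^2)
               = - sin (real n * \<phi>) * w"
proof -
  have pos: "0 < B^2 - 4 * r^2"
  proof -
    have "0 < (B - 2*r)*(B+2*r)" using assms by (intro mult_pos_pos) auto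
    then show ?thesis by (simp add: power2_eq_square algebra_simps)
  qed
  define sq where "sq = sqrt (B^2 - 4 * r^2)"
  have sq0: "0 \<le> sq" unfolding sq_def using assms using pos by simp
  have sq2: "sq^2 = B^2 - 4 * r^2" unfolding sq_def using assms using pos by simp
  have sqB: "sq < B" proof -
    have "sq^2 < B^2" using sq2 assms by simp
    then show ?thesis using sq0 assms by (smt (verit) power_mono)
  qed
  define \<rho> where "\<rho> = (B - sq) / (2 * r)"
  have \<rho>0: "0 < \<rho>" unfolding \<rho>_def using sqB assms by simp
  have "B - 2 * r < sq"
  proof -
    have e3: "2*r*r < B*r" using assms by (intro mult_strict_right_mono) auto
    have e1: "(B-2*r)^2 = B^2 - 4*(B*r) + 4*(r*r)" by (simp add: power2_eq_square algebra_simps)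
    have "(B - 2 * r)^2 < sq^2" unfolding e1 sq2 using e3 by (simp add: power2_eq_square)
    then show ?thesis using sq0 assms by (smt (verit) power_mono)
  qed
  then have \<rho>1: "\<rho> < 1" unfolding \<rho>_def using assms by (simp add: divide_less_eq)
  have quad: "r * \<rho>^2 - B * \<rho> + r = 0"
  proof -
    have "r * \<rho>^2 - B * \<rho> + r = ((B - sq)^2 - 2 * B * (B - sq) + 4 * r^2) / (4 * r)"
      unfolding \<rho>_def using assms by (simp add: field_simps power2_eq_square)
    also have "(B - sq)^2 - 2 * B * (B - sq) + 4 * r^2 = sq^2 - B^2 + 4 * r^2"
      by (simp add: power2_eq_square algebra_simps)
    also have "\<dots> = 0" using sq2 by simp
    finally show ?thesis by simp
  qed
  define lam where "lam = r / \<rho>"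
  have lam0: "0 < lam" unfolding lam_def using \<rho>0 assms by simp
  have Bl: "B = lam * (1 + \<rho>^2)" unfolding lam_def using \<rho>0 quad by (simp add: field_simps power2_eq_square)
  have rl: "r = lam * \<rho>" unfolding lam_def using \<rho>0 by simp
  have den: "0 < B - 2 * r * cos x" for x
  proof -
    have "r * cos x \<le> r" using assms by simp
    then show ?thesis using assms by linarith
  qed
  define K where "K = real n * (1 - (\<rho>^n)^2) / (lam * (1 - \<rho>^2))"
  have K0: "0 < K" unfolding K_def using assms \<rho>0 \<rho>1 lam0
    by (intro divide_pos_pos mult_pos_pos) (auto simp: power_less_one_iff abs_square_less_1)
  define D where "D x = 1 + (\<rho>^n)^2 - 2 * \<rho>^n * cos (real n * x)" for x
  have D0: "0 < D x" for x
  proof -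
    have "\<rho>^n < 1" using \<rho>0 \<rho>1 assms by (simp add: power_less_one_iff)
    moreover have "0 < \<rho>^n" using \<rho>0 by simp
    moreover have "\<rho>^n * cos (real n * x) \<le> \<rho>^n" using \<rho>0 by simp
    ultimately have "(1 - \<rho>^n)^2 \<le> D x" unfolding D_def by (simp add: power2_eq_square algebra_simps)
    moreover have "0 < (1 - \<rho>^n)^2" using \<open>\<rho>^n < 1\<close> by simp
    ultimately show ?thesis by linarith
  qed
  define F where "F x = (\<Sum>j=1..n. 1 / (B - 2 * r * cos (real j * zeta n - x)))" for x
  have FG: "F = (\<lambda>x. K / D x)"
  proof
    fix x
    have "F x = (\<Sum>j=1..n. (1 / (lam * (1 - \<rho>^2))) * ((1 - \<rho>^2) / (1 + \<rho>^2 - 2 * \<rho> * cos (real j * zeta n - x))))"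
      unfolding F_def
    proof (intro sum.cong refl)
      fix j
      have "1 - \<rho>^2 \<noteq> 0" using \<rho>0 \<rho>1 by (simp add: abs_square_less_1 less_imp_neq)
      moreover have "B - 2 * r * cos (real j * zeta n - x) = lam * (1 + \<rho>^2 - 2 * \<rho> * cos (real j * zeta n - x))"
        by (simp add: Bl rl algebra_simps)
      ultimately show "1 / (B - 2 * r * cos (real j * zeta n - x)) = (1 / (lam * (1 - \<rho>^2))) * ((1 - \<rho>^2) / (1 + \<rho>^2 - 2 * \<rho> * cos (real j * zeta n - x)))"
        by simp
    qed
    also have "\<dots> = (1 / (lam * (1 - \<rho>^2))) * (real n * (1 - (\<rho>^n)^2) / D x)"
      by (simp only: sum_distrib_left[symmetric] poisson_sum[OF assms(1) less_imp_le[OF \<rho>0] \<rho>1] D_def)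
    also have "\<dots> = K / D x" unfolding K_def by simp
    finally show "F x = K / D x" .
  qed
  define T where "T = (\<Sum>j=1..n. sin (real j * zeta n - \<phi>) / (B - 2 * r * cos (real j * zeta n - \<phi>))^2)"
  have dF: "(F has_real_derivative 2 * r * T) (at \<phi>)"
  proof -
    have "((\<lambda>x. \<Sum>j=1..n. 1 / (B - 2 * r * cos (real j * zeta n - x))) has_real_derivative
       (\<Sum>j=1..n. 2 * r * (sin (real j * zeta n - \<phi>) / (B - 2 * r * cos (real j * zeta n - \<phi>))^2))) (at \<phi>)"
    proof (rule DERIV_sum)
      fix j
      have "((\<lambda>x. 1 / (B - 2 * r * cos (real j * zeta n - x))) has_real_derivative
          - (- (2 * r * (- sin (real j * zeta n - \<phi>) * (0 - 1)))) / (B - 2 * r * cos (real j * zeta n - \<phi>))^2) (at \<phi>)"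
        using den[of "real j * zeta n - \<phi>"]
        by (auto intro!: derivative_eq_intros simp: power2_eq_square)
      then show "((\<lambda>x. 1 / (B - 2 * r * cos (real j * zeta n - x))) has_real_derivative
          2 * r * (sin (real j * zeta n - \<phi>) / (B - 2 * r * cos (real j * zeta n - \<phi>))^2)) (at \<phi>)"
        by simp
    qed
    then show ?thesis unfolding F_def T_def by (simp add: sum_distrib_left)
  qed
  have dG: "((\<lambda>x. K / D x) has_real_derivative
        - (K * (- (2 * \<rho>^n * (- sin (real n * \<phi>) * real n)))) / (D \<phi>)^2) (at \<phi>)"
    unfolding D_def using D0[of \<phi>] unfolding D_def
    by (auto intro!: derivative_eq_intros simp: power2_eq_square)
  have "2 * r * T = - (K * (- (2 * \<rho>^n * (- sin (real n * \<phi>) * real n)))) / (D \<phi>)^2"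
    using DERIV_unique[OF dF dG[folded FG]] .
  then have "T = - sin (real n * \<phi>) * (K * \<rho>^n * real n / (r * (D \<phi>)^2))"
    using assms D0[of \<phi>] by (simp add: field_simps)
  moreover have "0 < K * \<rho>^n * real n / (r * (D \<phi>)^2)"
    using K0 \<rho>0 assms D0[of \<phi>] by simp
  ultimately show ?thesis unfolding T_def by blast
qed



lemma pos_integral:
  fixes h :: "real \<Rightarrow> real"
  assumes "integrable lebesgue h" "\<And>x. 0 \<le> h x" "\<And>x. 0 < x \<Longrightarrow> 0 < h x"
  shows "0 < integral\<^sup>L lebesgue h"
proof -
  have ge: "0 \<le> integral\<^sup>L lebesgue h" using assms by (intro integral_nonneg_AE) auto
  have "integral\<^sup>L lebesgue h \<noteq> 0"
  proof
    assume "integral\<^sup>L lebesgue h = 0"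
    then have "AE x in lebesgue. h x = 0"
      using integral_nonneg_eq_0_iff_AE[of lebesgue h] assms by auto
    then obtain N where N: "{x \<in> space lebesgue. \<not> h x = 0} \<subseteq> N" "emeasure lebesgue N = 0" "N \<in> sets lebesgue"
      by (rule AE_E)
    have "{1..2} \<subseteq> N"
    proof
      fix x :: real assume "x \<in> {1..2}"
      then have "h x \<noteq> 0" using assms(3)[of x] by auto
      then show "x \<in> N" using N(1) by auto
    qed
    then have "emeasure lebesgue {1..2::real} \<le> emeasure lebesgue N"
      using N(3) by (rule emeasure_mono)
    moreover have "emeasure lebesgue {1..2::real} = 1" by simp
    ultimately show False using N(2) by simp
  qed
  then show ?thesis using ge by simp
qed
lemma meas_pos:
  fixes f :: "real \<Rightarrow> real"
  assumes "continuous_on {0<..} f"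
  shows "(\<lambda>x. indicator {0<..} x * f x) \<in> borel_measurable lebesgue"
proof -
  have "(\<lambda>x. indicator {0<..} x *\<^sub>R f x) \<in> borel_measurable borel"
    by (rule borel_measurable_continuous_on_indicator) (auto simp: assms)
  then show ?thesis by (intro measurable_completion) simp
qed

lemma cont_powr_neg:
  fixes \<gamma> :: real
  shows "continuous_on {0<..} (\<lambda>x::real. x powr (-\<gamma>))"
proof (rule continuous_on_powr)
  show "continuous_on {0<..} (\<lambda>x::real. x)" by (rule continuous_on_id)
  show "continuous_on {0<..} (\<lambda>x::real. -\<gamma>)" by (rule continuous_on_const)
qed auto

lemma f0_integrable:
  fixes \<gamma> :: real
  assumes "0 < \<gamma>" "\<gamma> < 1"
  shows "integrable lebesgue (\<lambda>x. indicator {0<..} x * (x powr (-\<gamma>) / (1 + x)^2))"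
proof (rule Bochner_Integration.integrable_bound [OF _ _ AE_I2])
  have i1: "integrable lebesgue (\<lambda>x. indicat_real {0<..1} x *\<^sub>R x powr (-\<gamma>))"
    using assms by (intro nonnegative_absolutely_integrable_1 [unfolded set_integrable_def] integrable_on_powr_from_0') auto
  have "(\<lambda>x. x powr (-2::real)) integrable_on {1..}"
    using has_integral_powr_to_inf[of "-2" 1] unfolding integrable_on_def by auto
  then have i2: "integrable lebesgue (\<lambda>x. indicat_real {1..} x *\<^sub>R x powr (-2::real))"
    by (intro nonnegative_absolutely_integrable_1 [unfolded set_integrable_def]) auto
  show "integrable lebesgue (\<lambda>x. indicat_real {0<..1} x *\<^sub>R x powr (-\<gamma>) + indicat_real {1..} x *\<^sub>R x powr (-2::real))"
    using i1 i2 by (rule Bochner_Integration.integrable_add)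
  show "(\<lambda>x. indicator {0<..} x * (x powr (-\<gamma>) / (1 + x)^2)) \<in> borel_measurable lebesgue"
    by (rule meas_pos) (auto intro!: continuous_intros cont_powr_neg simp: add_nonneg_eq_0_iff)
  fix x :: real
  show "norm (indicator {0<..} x * (x powr (-\<gamma>) / (1 + x)^2))
        \<le> norm (indicat_real {0<..1} x *\<^sub>R x powr (-\<gamma>) + indicat_real {1..} x *\<^sub>R x powr (-2::real))"
  proof (cases "x \<le> 0")
    case True then show ?thesis by (simp add: indicator_def)
  next
    case False
    then have x: "0 < x" by simp
    have q: "0 < x powr (-\<gamma>)" using x by simp
    have a: "x powr (-\<gamma>) / (1 + x)^2 \<le> x powr (-\<gamma>)"
      using frac_le[of "x powr (-\<gamma>)" "x powr (-\<gamma>)" 1 "(1+x)^2"] x q by (simp add: one_le_power)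
    show ?thesis
    proof (cases "x \<le> 1")
      case True
      then show ?thesis using x a q by (simp add: indicator_def)
    next
      case False
      have b1: "x powr (-\<gamma>) \<le> 1" 
      proof -
        have "1 \<le> x powr \<gamma>" using False assms by (intro ge_one_powr_ge_zero) auto
        then show ?thesis by (simp add: powr_minus inverse_le_1_iff)
      qed
      have "x powr (-\<gamma>) / (1 + x)^2 \<le> 1 / x^2"
        using frac_le[of 1 "x powr (-\<gamma>)" "x^2" "(1+x)^2"] x b1 by (simp add: power_mono)
      also have "1 / x^2 = x powr (-2::real)" using x by (simp add: powr_minus divide_inverse powr_realpow)
      finally show ?thesis using x False q by (simp add: indicator_def)
    qed
  qed
qed

lemma scale_pt:
  fixes \<gamma> A x :: real
  assumes "0 < A"
  shows "indicator {0<..} ((1/A) * x) * (((1/A) * x) powr (-\<gamma>) / (1 + (1/A) * x)^2)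
       = A powr (\<gamma> + 2) * (indicator {0<..} x * (x powr (-\<gamma>) / (x + A)^2))"
proof (cases "0 < x")
  case True
  have i: "indicator {0<..} ((1/A) * x) = (1::real)" using True assms by (simp add: indicator_def)
  have "((1/A) * x) powr (-\<gamma>) = x powr (-\<gamma>) * A powr \<gamma>"
  proof -
    have "((1/A) * x) powr (-\<gamma>) = (x / A) powr (-\<gamma>)" by simp
    also have "\<dots> = x powr (-\<gamma>) / A powr (-\<gamma>)" using True assms by (intro powr_divide)
    also have "\<dots> = x powr (-\<gamma>) * A powr \<gamma>" using assms by (simp add: powr_minus divide_inverse)
    finally show ?thesis .
  qed
  moreover have "(1 + (1/A) * x)^2 = (x + A)^2 / A^2" using assms by (simp add: field_simps)
  moreover have "A powr (\<gamma> + 2) = A powr \<gamma> * A^2" using assms by (simp add: powr_add powr_realpow)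
  ultimately show ?thesis using True assms i by (simp add: indicator_def field_simps)
next
  case False
  then show ?thesis using assms by (simp add: indicator_def zero_less_mult_iff zero_less_divide_iff)
qed

lemma scale_int:
  fixes \<gamma> A :: real
  assumes "0 < \<gamma>" "\<gamma> < 1" "0 < A"
  shows "integrable lebesgue (\<lambda>x. indicator {0<..} x * (x powr (-\<gamma>) / (x + A)^2))"
    and "integral\<^sup>L lebesgue (\<lambda>x. indicator {0<..} x * (x powr (-\<gamma>) / (x + A)^2))
         = A powr (-\<gamma> - 1) * integral\<^sup>L lebesgue (\<lambda>x. indicator {0<..} x * (x powr (-\<gamma>) / (1 + x)^2))"
proof -
  define f0 where "f0 x = indicator {0<..} x * (x powr (-\<gamma>) / (1 + x)^2)" for x :: real
  define g where "g x = indicator {0<..} x * (x powr (-\<gamma>) / (x + A)^2)" for x :: real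
  have fi: "integrable lebesgue f0" unfolding f0_def using f0_integrable[OF assms(1,2)] .
  have c: "1/A \<noteq> 0" using assms by simp
  have pt: "f0 (0 + (1/A) * x) = A powr (\<gamma> + 2) * g x" for x
    unfolding f0_def g_def using scale_pt[OF assms(3)] by simp
  have i1: "integrable lebesgue (\<lambda>x. f0 (0 + (1/A) * x))"
    by (rule lebesgue_integrable_real_affine[OF fi c])
  have gi: "integrable lebesgue g"
  proof -
    have "integrable lebesgue (\<lambda>x. A powr (- (\<gamma> + 2)) * f0 (0 + (1/A) * x))"
      using i1 by (rule integrable_mult_right)
    moreover have "(\<lambda>x. A powr (- (\<gamma> + 2)) * f0 (0 + (1/A) * x)) = g"
    proof
      fix x
      have "A powr (- (\<gamma> + 2)) * A powr (\<gamma> + 2) = 1" using assms by (simp add: powr_add[symmetric])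
      then show "A powr (- (\<gamma> + 2)) * f0 (0 + (1/A) * x) = g x"
        by (simp only: pt mult.assoc[symmetric])
    qed
    ultimately show ?thesis by metis
  qed
  then show "integrable lebesgue (\<lambda>x. indicator {0<..} x * (x powr (-\<gamma>) / (x + A)^2))"
    unfolding g_def .
  have "integral\<^sup>L lebesgue f0 = \<bar>1/A\<bar> *\<^sub>R integral\<^sup>L lebesgue (\<lambda>x. f0 (0 + (1/A) * x))"
    by (rule lebesgue_integral_real_affine[OF c])
  also have "\<dots> = (1/A) * (A powr (\<gamma> + 2) * integral\<^sup>L lebesgue g)"
  proof -
    have "(\<lambda>x. f0 (0 + (1/A) * x)) = (\<lambda>x. A powr (\<gamma> + 2) * g x)" by (rule ext, rule pt)
    then show ?thesis using assms by simp
  qed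
  finally have e: "integral\<^sup>L lebesgue f0 = (1/A) * (A powr (\<gamma> + 2) * integral\<^sup>L lebesgue g)" .
  have "A powr (-\<gamma> - 1) * ((1/A) * (A powr (\<gamma> + 2))) = 1"
  proof -
    have "(1/A) * (A powr (\<gamma> + 2)) = A powr (\<gamma> + 1)"
      using assms by (simp add: powr_add powr_realpow field_simps power2_eq_square)
    then show ?thesis using assms by (simp add: powr_add[symmetric])
  qed
  then show "integral\<^sup>L lebesgue (\<lambda>x. indicator {0<..} x * (x powr (-\<gamma>) / (x + A)^2))
         = A powr (-\<gamma> - 1) * integral\<^sup>L lebesgue (\<lambda>x. indicator {0<..} x * (x powr (-\<gamma>) / (1 + x)^2))"
    unfolding g_def[symmetric] f0_def[symmetric] e by (simp add: mult.assoc[symmetric])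
qed



lemma cmod_sq:
  fixes r \<theta> :: real
  shows "(cmod (complex_of_real r - cis \<theta>))^2 = r^2 - 2 * r * cos \<theta> + 1"
  unfolding cmod_power2 by (simp add: power2_eq_square algebra_simps)

lemma phi_rewrite:
  fixes r \<theta> \<alpha> :: real
  shows "phi_alpha \<alpha> (cmod (complex_of_real r - cis \<theta>))
       = (r^2 - 2 * r * cos \<theta> + 1) powr ((1 - \<alpha>) / 2) / (\<alpha> - 1)"
proof -
  define c where "c = cmod (complex_of_real r - cis \<theta>)"
  have c0: "0 \<le> c" unfolding c_def by simp
  have "c = (c^2) powr (1/2)" using c0 by (simp add: powr_half_sqrt)
  then have "c powr (1 - \<alpha>) = (c^2) powr ((1 - \<alpha>) / 2)" by (metis powr_powr times_divide_eq_left mult_1)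
  then show ?thesis unfolding phi_alpha_def c_def[symmetric] cmod_sq[of r \<theta>, folded c_def] by simp
qed

lemma s_pos:
  assumes "2 \<le> n"
  shows "0 < maxwell_s n \<alpha>"
proof -
  have t: "0 < sin (real j * zeta n / 2) powr (- (\<alpha> - 1))" if "j \<in> {1..n-1}" for j
  proof -
    have "0 < real j * zeta n / 2" "real j * zeta n / 2 < pi"
      using that assms by (auto simp: zeta_def field_simps)
    then have "0 < sin (real j * zeta n / 2)" by (rule sin_gt_zero)
    then show ?thesis by simp
  qed
  have "0 < (\<Sum>j = 1..n - 1. sin (real j * zeta n / 2) powr (- (\<alpha> - 1)))"
    using assms by (intro sum_pos t) auto
  then show ?thesis unfolding maxwell_s_def by simp
qed

lemma A_pos:
  assumes "maxwell_dom n r \<phi>" "j \<in> {1..n}"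
  shows "0 < r^2 - 2 * r * cos (real j * zeta n - \<phi>) + 1"
proof -
  have "complex_of_real r \<noteq> cis (real j * zeta n - \<phi>)"
  proof
    assume h: "complex_of_real r = cis (real j * zeta n - \<phi>)"
    have "complex_of_real r * cis \<phi> = cis (real j * zeta n)"
      unfolding h by (simp add: cis_mult)
    then show False using assms unfolding maxwell_dom_def by blast
  qed
  then have "0 < (cmod (complex_of_real r - cis (real j * zeta n - \<phi>)))^2" by simp
  then show ?thesis by (simp only: cmod_sq)
qed

lemma V_deriv:
  fixes n :: nat and \<alpha> \<mu> r \<phi> :: real
  assumes "maxwell_dom n r \<phi>" "1 < \<alpha>"
  shows "((\<lambda>\<psi>. maxwell_V n \<alpha> \<mu> r \<psi>) has_real_derivative
     (1 / (maxwell_s n \<alpha> + \<mu>)) * (\<Sum>j=1..n. r * sin (real j * zeta n - \<phi>)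
        * (r^2 - 2 * r * cos (real j * zeta n - \<phi>) + 1) powr (- ((\<alpha> - 1) / 2) - 1))) (at \<phi>)"
proof -
  define c where "c = 1 / (maxwell_s n \<alpha> + \<mu>)"
  define A where "A j \<psi> = r^2 - 2 * r * cos (real j * zeta n - \<psi>) + 1" for j :: nat and \<psi>
  have V: "(\<lambda>\<psi>. maxwell_V n \<alpha> \<mu> r \<psi>) = (\<lambda>\<psi>. (r\<^sup>2 / 2 + \<mu> / (maxwell_s n \<alpha> + \<mu>) * phi_alpha \<alpha> r)
      + (\<Sum>j=1..n. c * (A j \<psi> powr ((1 - \<alpha>) / 2) / (\<alpha> - 1))))"
    by (rule ext) (simp add: maxwell_V_def phi_rewrite c_def A_def)
  have dA: "(A j has_real_derivative - (2 * r * sin (real j * zeta n - \<phi>))) (at \<phi>)" for j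
    unfolding A_def by (auto intro!: derivative_eq_intros)
  have trm: "((\<lambda>\<psi>. c * (A j \<psi> powr ((1 - \<alpha>) / 2) / (\<alpha> - 1))) has_real_derivative
      c * (r * sin (real j * zeta n - \<phi>) * A j \<phi> powr (- ((\<alpha> - 1) / 2) - 1))) (at \<phi>)"
    if "j \<in> {1..n}" for j
  proof -
    have pos: "0 < A j \<phi>" unfolding A_def by (rule A_pos[OF assms(1) that])
    have "((\<lambda>\<psi>. A j \<psi> powr ((1 - \<alpha>) / 2)) has_real_derivative
        ((1 - \<alpha>) / 2) * A j \<phi> powr ((1 - \<alpha>) / 2 - 1) * (- (2 * r * sin (real j * zeta n - \<phi>)))) (at \<phi>)"
      using DERIV_fun_powr[OF dA pos, of "(1 - \<alpha>) / 2"] by simp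
    then have "((\<lambda>\<psi>. c * (A j \<psi> powr ((1 - \<alpha>) / 2) / (\<alpha> - 1))) has_real_derivative
        c * (((1 - \<alpha>) / 2) * A j \<phi> powr ((1 - \<alpha>) / 2 - 1) * (- (2 * r * sin (real j * zeta n - \<phi>)))
        / (\<alpha> - 1))) (at \<phi>)"
      by (intro DERIV_cmult DERIV_cdivide)
    moreover have "c * (((1 - \<alpha>) / 2) * A j \<phi> powr ((1 - \<alpha>) / 2 - 1) * (- (2 * r * sin (real j * zeta n - \<phi>)))
        / (\<alpha> - 1)) = c * (r * sin (real j * zeta n - \<phi>) * A j \<phi> powr (- ((\<alpha> - 1) / 2) - 1))"
    proof -
      have ex: "(1 - \<alpha>) / 2 - 1 = - ((\<alpha> - 1) / 2) - 1" by (simp add: field_simps)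
      show ?thesis unfolding ex using assms(2) by (simp add: field_simps)
    qed
    ultimately show ?thesis by (rule DERIV_cong)
  qed
  have "((\<lambda>\<psi>. (r\<^sup>2 / 2 + \<mu> / (maxwell_s n \<alpha> + \<mu>) * phi_alpha \<alpha> r)
      + (\<Sum>j=1..n. c * (A j \<psi> powr ((1 - \<alpha>) / 2) / (\<alpha> - 1)))) has_real_derivative
      0 + (\<Sum>j=1..n. c * (r * sin (real j * zeta n - \<phi>) * A j \<phi> powr (- ((\<alpha> - 1) / 2) - 1)))) (at \<phi>)"
    by (intro DERIV_add DERIV_const DERIV_sum trm)
  then show ?thesis unfolding V by (simp add: sum_distrib_left c_def A_def mult.assoc)
qed

lemma key:
  fixes n :: nat and \<alpha> \<mu> r \<phi> :: real
  assumes "1 < \<alpha>" "\<alpha> < 3" "2 \<le> n" "0 \<le> \<mu>" "maxwell_dom n r \<phi>"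
  shows "\<exists>w>0. ((\<lambda>\<psi>. maxwell_V n \<alpha> \<mu> r \<psi>) has_real_derivative (- sin (real n * \<phi>) * w)) (at \<phi>)"
proof -
  define \<gamma> where "\<gamma> = (\<alpha> - 1) / 2"
  have g0: "0 < \<gamma>" "\<gamma> < 1" unfolding \<gamma>_def using assms by auto
  have r0: "0 < r" using assms(5) unfolding maxwell_dom_def by simp
  define th where "th j = real j * zeta n - \<phi>" for j :: nat
  define A where "A j = r^2 - 2 * r * cos (th j) + 1" for j :: nat
  have Apos: "0 < A j" if "j \<in> {1..n}" for j unfolding A_def th_def by (rule A_pos[OF assms(5) that])
  define f0 where "f0 x = indicator {0<..} x * (x powr (-\<gamma>) / (1 + x)^2)" for x :: real
  define I0 where "I0 = integral\<^sup>L lebesgue f0"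
  have f0i: "integrable lebesgue f0" unfolding f0_def by (rule f0_integrable[OF g0])
  have I0pos: "0 < I0" unfolding I0_def
  proof (rule pos_integral[OF f0i])
    show "0 \<le> f0 x" for x unfolding f0_def by (simp add: indicator_def)
    show "0 < f0 x" if "0 < x" for x using that unfolding f0_def by (simp add: indicator_def)
  qed
  define g where "g j x = indicator {0<..} x * (x powr (-\<gamma>) / (x + A j)^2)" for j :: nat and x :: real
  have gi: "integrable lebesgue (g j)" if "j \<in> {1..n}" for j
    unfolding g_def by (rule scale_int(1)[OF g0 Apos[OF that]])
  have gint: "integral\<^sup>L lebesgue (g j) = A j powr (-\<gamma> - 1) * I0" if "j \<in> {1..n}" for j
    unfolding g_def I0_def f0_def by (rule scale_int(2)[OF g0 Apos[OF that]])
  define H where "H x = (\<Sum>j=1..n. sin (th j) * g j x)" for x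
  have Hi: "integrable lebesgue H" unfolding H_def
    by (intro Bochner_Integration.integrable_sum integrable_mult_right gi)
  have Hint: "integral\<^sup>L lebesgue H = (\<Sum>j=1..n. sin (th j) * (A j powr (-\<gamma> - 1) * I0))"
    unfolding H_def
    by (subst Bochner_Integration.integral_sum) (auto intro!: integrable_mult_right gi sum.cong simp: gint)
  define D where "D = (1 / (maxwell_s n \<alpha> + \<mu>)) * (\<Sum>j=1..n. r * sin (th j) * A j powr (-\<gamma> - 1))"
  have dV: "((\<lambda>\<psi>. maxwell_V n \<alpha> \<mu> r \<psi>) has_real_derivative D) (at \<phi>)"
    using V_deriv[OF assms(5) assms(1), of \<mu>] unfolding D_def th_def A_def \<gamma>_def by simp
  have DH: "D = (1 / (maxwell_s n \<alpha> + \<mu>)) * (r / I0) * integral\<^sup>L lebesgue H"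
  proof -
    define S where "S = (\<Sum>j=1..n. sin (th j) * A j powr (-\<gamma> - 1))"
    have e1: "(\<Sum>j=1..n. sin (th j) * (A j powr (-\<gamma> - 1) * I0)) = I0 * S"
      unfolding S_def by (simp add: sum_distrib_left mult_ac)
    have e2: "(\<Sum>j=1..n. r * sin (th j) * A j powr (-\<gamma> - 1)) = r * S"
      unfolding S_def by (simp add: sum_distrib_left mult_ac)
    show ?thesis unfolding D_def Hint e1 e2 using I0pos by simp
  qed
  have Hsign: "\<exists>w>0. H x = - sin (real n * \<phi>) * (x powr (-\<gamma>) * w)" if "0 < x" for x
  proof -
    have "2 * r < x + 1 + r^2"
    proof -
      have "0 \<le> (r - 1)^2" by simp
      then show ?thesis using that by (simp add: power2_eq_square algebra_simps)
    qed
    then obtain w where w: "0 < w" "(\<Sum>j=1..n. sin (real j * zeta n - \<phi>) /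
        ((x + 1 + r^2) - 2 * r * cos (real j * zeta n - \<phi>))^2) = - sin (real n * \<phi>) * w"
      using T_sign[of n r "x + 1 + r^2" \<phi>] assms(3) r0 by auto
    have "H x = x powr (-\<gamma>) * (\<Sum>j=1..n. sin (real j * zeta n - \<phi>) /
        ((x + 1 + r^2) - 2 * r * cos (real j * zeta n - \<phi>))^2)"
      unfolding H_def g_def using that
      by (simp add: sum_distrib_left A_def th_def algebra_simps)
    then show ?thesis using w by auto
  qed
  have Hneg: "H x = 0" if "\<not> 0 < x" for x
    unfolding H_def g_def using that by simp
  have sp: "0 < maxwell_s n \<alpha> + \<mu>" using s_pos[OF assms(3), of \<alpha>] assms(4) by simp
  show ?thesis
  proof (cases "sin (real n * \<phi>) = 0")
    case True
    have "H = (\<lambda>x. 0)"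
    proof
      fix x show "H x = 0"
        using Hsign[of x] Hneg[of x] True by (cases "0 < x") auto
    qed
    then have "D = 0" unfolding DH by simp
    then show ?thesis using dV True by (intro exI[of _ 1]) simp
  next
    case False
    define W where "W x = H x / (- sin (real n * \<phi>))" for x
    have Wi: "integrable lebesgue W" unfolding W_def using Hi by simp
    have Wpos: "0 < integral\<^sup>L lebesgue W"
    proof (rule pos_integral[OF Wi])
      show "0 < W x" if "0 < x" for x
      proof -
        obtain w where "0 < w" "H x = - sin (real n * \<phi>) * (x powr (-\<gamma>) * w)"
          using Hsign[of x] \<open>0 < x\<close> by blast
        then show ?thesis unfolding W_def using False that by simp
      qed
      then show "0 \<le> W x" for x using Hneg[of x] unfolding W_def by (cases "0 < x") force+
    qed
    have HW: "integral\<^sup>L lebesgue H = - sin (real n * \<phi>) * integral\<^sup>L lebesgue W"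
      unfolding W_def using False by simp
    have "D = - sin (real n * \<phi>) * ((1 / (maxwell_s n \<alpha> + \<mu>)) * (r / I0) * integral\<^sup>L lebesgue W)"
      unfolding DH HW by simp
    moreover have "0 < (1 / (maxwell_s n \<alpha> + \<mu>)) * (r / I0) * integral\<^sup>L lebesgue W"
      using sp r0 I0pos Wpos by simp
    ultimately show ?thesis using dV by auto
  qed
qed


theorem mainTheorem9:
  fixes n :: nat and \<alpha> \<mu> :: real
  assumes "1 < \<alpha>" and "\<alpha> < 3" and "2 \<le> n" and "0 \<le> \<mu>"
  shows "\<exists>\<omega> :: real \<Rightarrow> real \<Rightarrow> real.
           \<forall>r \<phi>. maxwell_dom n r \<phi> \<longrightarrow>
             0 < \<omega> r \<phi> \<and>
             ((\<lambda>\<psi>. maxwell_V n \<alpha> \<mu> r \<psi>) has_real_derivative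
                (- sin (real n * \<phi>) * \<omega> r \<phi>)) (at \<phi>)"
proof -
  have "\<forall>r \<phi>. \<exists>w. maxwell_dom n r \<phi> \<longrightarrow> 0 < w \<and>
      ((\<lambda>\<psi>. maxwell_V n \<alpha> \<mu> r \<psi>) has_real_derivative (- sin (real n * \<phi>) * w)) (at \<phi>)"
    using key[OF assms] by blast
  then show ?thesis by metis
qed

end
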